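(* Let $H_\varepsilon=T_\varepsilon+V_\varepsilon$ be as in the context. For $x\in(\varepsilon\mathbb Z)^d$ and $R>0$ let $B_x(R):=\{y\in(\varepsilon\mathbb Z)^d:|x-y|<R\}$ and $$\Lambda_R(x,H_\varepsilon):=\inf\Big\{\frac{\langle H_\varepsilon\phi,\phi\rangle}{\|\phi\|^2_{\ell^2}}:\ \phi\in c_0(B_x(R)),\ \phi\ne0\Big\}.$$ Then for every $\delta>0$ there is $R_\delta>0$ such that for all $R>R_\delta$ and all $\phi\in c_0((\varepsilon\mathbb Z)^d)$, $$\langle H_\varepsilon\phi,\phi\rangle\ge\sum_{x\in(\varepsilon\mathbb Z)^d}\big(\Lambda_R(x,H_\varepsilon)-\delta\big)|\phi(x)|^2.$$
   Context: Let $d\ge1$, $\varepsilon\in(0,1]$, $\ell^2((\varepsilon\mathbb Z)^d)$ with $\langle u,v\rangle=\sum_x\bar u(x)v(x)$, $(\tau_\gamma u)(x)=u(x+\gamma)$. For $D\subset(\varepsilon\mathbb Z)^d$, $c_0(D)$ is the space of real-valued functions on $(\varepsilon\mathbb Z)^d$ with finite support contained in $D$. (a) Coefficients $a_\gamma(x,\varepsilon)\in\mathbb R$ ($\gamma\in(\varepsilon\mathbb Z)^d$, $x\in\mathbb R^d$) with: (i) $a_\gamma=a^{(0)}_\gamma(x)+\varepsilon a^{(1)}_\gamma(x)+R^{(2)}_\gamma(x,\varepsilon)$, $a^{(j)}_\gamma\in C^\infty$, $|a^{(j)}_\gamma(x)-a^{(j)}_\gamma(x+h)|=O(|h|)$ uniformly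 in $\gamma,x$, $R^{(2)}_\gamma\in C^\infty(\mathbb R^d\times(0,1])$; (ii) $\sum_\gamma a^{(0)}_\gamma=0$, $a^{(0)}_\gamma\le0$ for $\gamma\ne0$; (iii) $a_\gamma(x,\varepsilon)=a_{-\gamma}(x+\gamma,\varepsilon)$; (iv) for all $n\in\mathbb N,\alpha\in\mathbb N^d$, $\|\,|\cdot/\varepsilon|^n\partial^\alpha_xa^{(j)}_\cdot(x)\|_{\ell^2_\gamma}\le C$ and $\|\,|\cdot/\varepsilon|^n\partial^\alpha_xR^{(2)}_\cdot(x,\varepsilon)\|_{\ell^2_\gamma}\le C\varepsilon^2$ uniformly; (v) $\mathrm{span}\{\gamma:a^{(0)}_\gamma(x)<0\}=\mathbb R^d$ for all $x$. $T_\varepsilon=\sum_\gamma a_\gamma(\cdot,\varepsilon)\tau_\gamma$. (b) $V_\varepsilon$ is the restriction to $(\varepsilon\mathbb Z)^d$ of $\hat V_\varepsilon=V_0+\varepsilon V_1+R_2(\cdot;\varepsilon)\in C^\infty(\mathbb R^d)$, $V_0,V_1\in C^\infty$, $R_2\in C^\infty(\mathbb R^d\times(0,\varepsilon_0])$, $\sup_K|R_2|\le C_K\varepsilon^2$ on compacts $K$; $V_\varepsilon$ polynomially bounded and $V_\varepsilon(x)>C>0$ for $|x|\ge R$, $\varepsilon\le\varepsilon_0$; $V_0\ge0$, vanishing exactly at finitely many points $x_1,\dots,x_m$ with positive definite Hessians. (c) $t_0(x_j,\xi):=\sum_\gamma a^{(0)}_\gamma(x_j)e^{-i\gamma\cdot\xi/\varepsilon}>0$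 for $\xi\notin2\pi\mathbb Z^d$. $H_\varepsilon$ is the self-adjoint realization of $T_\varepsilon+V_\varepsilon$ on the maximal domain of multiplication by $V_\varepsilon$. *)

theory Defs
  imports "HOL-Analysis.Analysis"
begin

definition pderiv_dir :: "'a::real_normed_vector \<Rightarrow> ('a \<Rightarrow> real) \<Rightarrow> 'a \<Rightarrow> real" where
  "pderiv_dir b f x = deriv (\<lambda>t. f (x + t *\<^sub>R b)) 0"

text \<open>Iterated partial derivative: a multi-index is a list of basis directions.\<close>
fun iter_pd :: "'a::real_normed_vector list \<Rightarrow> ('a \<Rightarrow> real) \<Rightarrow> 'a \<Rightarrow> real" where
  "iter_pd [] f = f"
| "iter_pd (b # bs) f = pderiv_dir b (iter_pd bs f)"

definition smooth_on :: "'a::euclidean_space set \<Rightarrow> ('a \<Rightarrow> real) \<Rightarrow> bool" where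
  "smooth_on U f \<longleftrightarrow> open U \<and>
     (\<forall>bs. set bs \<subseteq> Basis \<longrightarrow> (\<forall>x\<in>U. iter_pd bs f differentiable (at x)))"

definition C_inf_on :: "'a::euclidean_space set \<Rightarrow> ('a \<Rightarrow> real) \<Rightarrow> bool" where
  "C_inf_on S f \<longleftrightarrow> (\<exists>U g. S \<subseteq> U \<and> smooth_on U g \<and> (\<forall>x\<in>S. g x = f x))"

definition iv :: "int^'n \<Rightarrow> real^'n" where
  "iv k = (\<chi> i. of_int (k $ i))"

definition lattice :: "real \<Rightarrow> (real^'n) set" where
  "lattice \<epsilon> = {\<epsilon> *\<^sub>R iv k | k. True}"

definition c0 :: "real \<Rightarrow> (real^'n) set \<Rightarrow> (real^'n \<Rightarrow> real) set" where
  "c0 \<epsilon> D = {\<phi>. finite {x. \<phi> x \<noteq> 0} \<and> {x. \<phi> x \<noteq> 0} \<subseteq> D \<inter> lattice \<epsilon>}"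

definition ball_lat :: "real \<Rightarrow> real^'n \<Rightarrow> real \<Rightarrow> (real^'n) set" where
  "ball_lat \<epsilon> x R = {y \<in> lattice \<epsilon>. norm (x - y) < R}"

text \<open>Coefficients a k x eps stand for a_gamma(x,eps) with gamma = eps k, k in Z^d.
  (T u)(x) = sum_gamma a_gamma(x,eps) u(x+gamma).\<close>
definition Top :: "(int^'n \<Rightarrow> real^'n \<Rightarrow> real \<Rightarrow> real) \<Rightarrow> real \<Rightarrow> (real^'n \<Rightarrow> real) \<Rightarrow> real^'n \<Rightarrow> real" where
  "Top a \<epsilon> u x = (\<Sum>\<^sub>\<infinity>k. a k x \<epsilon> * u (x + \<epsilon> *\<^sub>R iv k))"

definition Hop :: "(int^'n \<Rightarrow> real^'n \<Rightarrow> real \<Rightarrow> real) \<Rightarrow> (real^'n \<Rightarrow> real) \<Rightarrow> real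
     \<Rightarrow> (real^'n \<Rightarrow> real) \<Rightarrow> real^'n \<Rightarrow> real" where
  "Hop a V \<epsilon> u x = Top a \<epsilon> u x + V x * u x"

definition lat_inner :: "real \<Rightarrow> (real^'n \<Rightarrow> real) \<Rightarrow> (real^'n \<Rightarrow> real) \<Rightarrow> real" where
  "lat_inner \<epsilon> u v = (\<Sum>\<^sub>\<infinity>x\<in>lattice \<epsilon>. u x * v x)"

definition LambdaR :: "(int^'n \<Rightarrow> real^'n \<Rightarrow> real \<Rightarrow> real) \<Rightarrow> (real^'n \<Rightarrow> real) \<Rightarrow> real
     \<Rightarrow> real \<Rightarrow> real^'n \<Rightarrow> real" where
  "LambdaR a V \<epsilon> R x = Inf {lat_inner \<epsilon> (Hop a V \<epsilon> \<phi>) \<phi> / lat_inner \<epsilon> \<phi> \<phi> | \<phi>.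
       \<phi> \<in> c0 \<epsilon> (ball_lat \<epsilon> x R) \<and> \<phi> \<noteq> (\<lambda>_. 0)}"

text \<open>ell^2_gamma weighted bound: || |gamma/eps|^n f_gamma ||_{ell^2} \<le> C.\<close>
definition l2_weighted_le :: "nat \<Rightarrow> (int^'n \<Rightarrow> real) \<Rightarrow> real \<Rightarrow> bool" where
  "l2_weighted_le n f C \<longleftrightarrow>
     (\<lambda>k. (norm (iv k) ^ n * f k)\<^sup>2) summable_on UNIV \<and>
     sqrt (\<Sum>\<^sub>\<infinity>k. (norm (iv k) ^ n * f k)\<^sup>2) \<le> C"

definition kinetic_hyp :: "(int^'n \<Rightarrow> real^'n \<Rightarrow> real \<Rightarrow> real) \<Rightarrow> (int^'n \<Rightarrow> real^'n \<Rightarrow> real)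
   \<Rightarrow> (int^'n \<Rightarrow> real^'n \<Rightarrow> real) \<Rightarrow> (int^'n \<Rightarrow> real^'n \<Rightarrow> real \<Rightarrow> real) \<Rightarrow> bool" where
  "kinetic_hyp a a0 a1 R2 \<longleftrightarrow>
   \<comment> \<open>(i)\<close>
   (\<forall>k x \<epsilon>. 0 < \<epsilon> \<and> \<epsilon> \<le> 1 \<longrightarrow> a k x \<epsilon> = a0 k x + \<epsilon> * a1 k x + R2 k x \<epsilon>) \<and>
   (\<forall>k. C_inf_on UNIV (a0 k) \<and> C_inf_on UNIV (a1 k)) \<and>
   (\<exists>C. \<forall>k x h. \<bar>a0 k x - a0 k (x + h)\<bar> \<le> C * norm h \<and> \<bar>a1 k x - a1 k (x + h)\<bar> \<le> C * norm h) \<and>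
   (\<forall>k. C_inf_on (UNIV \<times> {0<..1}) (\<lambda>(x, \<epsilon>). R2 k x \<epsilon>)) \<and>
   \<comment> \<open>(ii)\<close>
   (\<forall>x. (\<Sum>\<^sub>\<infinity>k. a0 k x) = 0) \<and>
   (\<forall>k x. k \<noteq> 0 \<longrightarrow> a0 k x \<le> 0) \<and>
   \<comment> \<open>(iii)\<close>
   (\<forall>k x \<epsilon>. 0 < \<epsilon> \<and> \<epsilon> \<le> 1 \<longrightarrow> a k x \<epsilon> = a (- k) (x + \<epsilon> *\<^sub>R iv k) \<epsilon>) \<and>
   \<comment> \<open>(iv)\<close>
   (\<forall>n bs. set bs \<subseteq> Basis \<longrightarrow> (\<exists>C. \<forall>x.
        l2_weighted_le n (\<lambda>k. iter_pd bs (a0 k) x) C \<and>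
        l2_weighted_le n (\<lambda>k. iter_pd bs (a1 k) x) C)) \<and>
   (\<forall>n bs. set bs \<subseteq> Basis \<longrightarrow> (\<exists>C. \<forall>x \<epsilon>. 0 < \<epsilon> \<and> \<epsilon> \<le> 1 \<longrightarrow>
        l2_weighted_le n (\<lambda>k. iter_pd bs (\<lambda>y. R2 k y \<epsilon>) x) (C * \<epsilon>\<^sup>2))) \<and>
   \<comment> \<open>(v)\<close>
   (\<forall>x. span {iv k | k. a0 k x < 0} = UNIV)"

definition pos_def_hessian :: "(real^'n \<Rightarrow> real) \<Rightarrow> real^'n \<Rightarrow> bool" where
  "pos_def_hessian f x \<longleftrightarrow> (\<forall>v. v \<noteq> 0 \<longrightarrow>
     (\<Sum>i\<in>Basis. \<Sum>j\<in>Basis. (v \<bullet> i) * (v \<bullet> j) * iter_pd [i, j] f x) > 0)"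

text \<open>hat V_eps = V0 + eps V1 + RV(., eps); V_eps is its restriction to the lattice.\<close>
definition potential_hyp :: "real \<Rightarrow> (real^'n \<Rightarrow> real) \<Rightarrow> (real^'n \<Rightarrow> real)
     \<Rightarrow> (real^'n \<Rightarrow> real \<Rightarrow> real) \<Rightarrow> bool" where
  "potential_hyp \<epsilon>0 V0 V1 RV \<longleftrightarrow>
   0 < \<epsilon>0 \<and>
   C_inf_on UNIV V0 \<and> C_inf_on UNIV V1 \<and>
   C_inf_on (UNIV \<times> {0<..\<epsilon>0}) (\<lambda>(x, \<epsilon>). RV x \<epsilon>) \<and>
   (\<forall>K. compact K \<longrightarrow> (\<exists>C. \<forall>\<epsilon> x. 0 < \<epsilon> \<and> \<epsilon> \<le> \<epsilon>0 \<and> x \<in> K \<longrightarrow> \<bar>RV x \<epsilon>\<bar> \<le> C * \<epsilon>\<^sup>2)) \<and>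
   (\<forall>\<epsilon>. 0 < \<epsilon> \<and> \<epsilon> \<le> \<epsilon>0 \<longrightarrow> (\<exists>C N. \<forall>x\<in>lattice \<epsilon>.
        \<bar>V0 x + \<epsilon> * V1 x + RV x \<epsilon>\<bar> \<le> C * (1 + norm x) ^ N)) \<and>
   (\<exists>C R. C > 0 \<and> (\<forall>\<epsilon> x. 0 < \<epsilon> \<and> \<epsilon> \<le> \<epsilon>0 \<and> x \<in> lattice \<epsilon> \<and> norm x \<ge> R \<longrightarrow>
        V0 x + \<epsilon> * V1 x + RV x \<epsilon> > C)) \<and>
   (\<forall>x. V0 x \<ge> 0) \<and>
   finite {x. V0 x = 0} \<and>
   (\<forall>x. V0 x = 0 \<longrightarrow> pos_def_hessian V0 x)"

text \<open>t_0(x,xi) = sum_gamma a0_gamma(x) e^{-i gamma xi/eps}, gamma = eps k.\<close>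
definition t0 :: "(int^'n \<Rightarrow> real^'n \<Rightarrow> real) \<Rightarrow> real^'n \<Rightarrow> real^'n \<Rightarrow> complex" where
  "t0 a0 x \<xi> = (\<Sum>\<^sub>\<infinity>k. complex_of_real (a0 k x) * cis (- (iv k \<bullet> \<xi>)))"

definition symbol_hyp :: "(int^'n \<Rightarrow> real^'n \<Rightarrow> real) \<Rightarrow> (real^'n \<Rightarrow> real) \<Rightarrow> bool" where
  "symbol_hyp a0 V0 \<longleftrightarrow> (\<forall>x \<xi>. V0 x = 0 \<and> \<not> (\<exists>k. \<xi> = (2 * pi) *\<^sub>R iv k) \<longrightarrow>
      t0 a0 x \<xi> \<in> \<real> \<and> Re (t0 a0 x \<xi>) > 0)"

end

theory Submission
  imports Defs
begin

lemma iv_add: "iv (j + k) = iv j + iv k"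
  by (simp add: iv_def vec_eq_iff)
lemma iv_minus: "iv (- k) = - iv k"
  by (simp add: iv_def vec_eq_iff)
lemma iv_diff: "iv (j - k) = iv j - iv k"
  by (simp add: iv_def vec_eq_iff)
lemma iv_zero[simp]: "iv 0 = 0"
  by (simp add: iv_def vec_eq_iff)
lemma iv_nth[simp]: "iv k $ i = of_int (k $ i)"
  by (simp add: iv_def)
lemma inj_iv: "inj iv"
  by (auto simp: inj_on_def iv_def vec_eq_iff)
lemma norm_iv_ge1: "k \<noteq> 0 \<Longrightarrow> 1 \<le> norm (iv k)"
proof -
  assume "k \<noteq> 0"
  then obtain i where "k $ i \<noteq> 0" by (auto simp: vec_eq_iff)
  then have "1 \<le> \<bar>iv k $ i\<bar>" by simp
  also have "\<dots> \<le> norm (iv k)" by (rule component_le_norm_cart)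
  finally show ?thesis .
qed
lemma norm_iv_minus: "norm (iv (- k)) = norm (iv k)"
  by (simp add: iv_minus)

lemma box_sum:
  fixes g :: "'n::finite \<Rightarrow> int \<Rightarrow> real"
  assumes "\<And>i. finite (T i)"
  shows "(\<Sum>k\<in>{k::int^'n. \<forall>i. k$i \<in> T i}. \<Prod>i\<in>UNIV. g i (k$i)) = (\<Prod>i\<in>UNIV. \<Sum>t\<in>T i. g i t)"
proof -
  have b: "bij_betw vec_nth {k::int^'n. \<forall>i. k$i \<in> T i} (PiE UNIV T)"
    by (rule bij_betwI[of _ _ _ vec_lambda]) (auto simp: PiE_def extensional_def vec_eq_iff Pi_def)
  have "(\<Sum>k\<in>{k::int^'n. \<forall>i. k$i \<in> T i}. \<Prod>i\<in>UNIV. g i (k$i)) = (\<Sum>h\<in>PiE UNIV T. \<Prod>i\<in>UNIV. g i (h i))"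
    using sum.reindex_bij_betw[OF b, of "\<lambda>h. \<Prod>i\<in>UNIV. g i (h i)"] by simp
  also have "\<dots> = (\<Prod>i\<in>UNIV. \<Sum>t\<in>T i. g i t)"
    by (rule prod_sum_PiE[symmetric]) (use assms in auto)
  finally show ?thesis .
qed

lemma box_finite:
  assumes "\<And>i. finite (T i)"
  shows "finite {k::int^'n::finite. \<forall>i. k$i \<in> T i}"
proof -
  have b: "bij_betw vec_nth {k::int^'n. \<forall>i. k$i \<in> T i} (PiE UNIV T)"
    by (rule bij_betwI[of _ _ _ vec_lambda]) (auto simp: PiE_def extensional_def vec_eq_iff Pi_def)
  show ?thesis using bij_betw_finite[OF b] assms by (simp add: finite_PiE)
qed

lemma nat_sum_bound: "\<exists>G. \<forall>A. finite A \<longrightarrow> (\<Sum>n\<in>A. 1 / (1 + (real n)\<^sup>2)) \<le> G"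
proof -
  have s: "summable (\<lambda>n::nat. 1 / (1 + (real n)\<^sup>2))"
  proof (rule summable_comparison_test'[OF inverse_power_summable[of 2]])
    show "norm (1 / (1 + (real n)\<^sup>2)) \<le> inverse (real n ^ 2)" if "n \<ge> 1" for n
      using that by (simp add: divide_inverse) (rule le_imp_inverse_le; simp)
  qed simp
  show ?thesis
    by (rule exI[of _ "suminf (\<lambda>n::nat. 1 / (1 + (real n)\<^sup>2))"]) (auto intro!: sum_le_suminf[OF s])
qed

lemma int_sum_bound: "\<exists>G. \<forall>T. finite T \<longrightarrow> (\<Sum>t\<in>T. 1 / (1 + (real_of_int t)\<^sup>2)) \<le> G"
proof -
  obtain G where G: "\<And>A. finite A \<Longrightarrow> (\<Sum>n\<in>A. 1 / (1 + (real n)\<^sup>2)) \<le> G"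
    using nat_sum_bound by blast
  have "(\<Sum>t\<in>T. 1 / (1 + (real_of_int t)\<^sup>2)) \<le> 2 * G" if T: "finite T" for T :: "int set"
  proof -
    let ?g = "\<lambda>t::int. 1 / (1 + (real_of_int t)\<^sup>2)"
    let ?h = "\<lambda>n::nat. 1 / (1 + (real n)\<^sup>2)"
    have split: "sum ?g T = sum ?g (T \<inter> {0..}) + sum ?g (T - {0..})"
      using T by (metis Diff_Int2 Int_absorb Int_commute sum.Int_Diff)
    have inj: "inj_on (\<lambda>t. nat \<bar>t\<bar>) (T \<inter> {0..})" "inj_on (\<lambda>t. nat \<bar>t\<bar>) (T - {0..})"
      by (auto simp: inj_on_def)
    have e1: "sum ?g (T \<inter> {0..}) = sum ?h ((\<lambda>t. nat \<bar>t\<bar>) ` (T \<inter> {0..}))"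
      by (subst sum.reindex[OF inj(1)]) (auto intro!: sum.cong)
    have e2: "sum ?g (T - {0..}) = sum ?h ((\<lambda>t. nat \<bar>t\<bar>) ` (T - {0..}))"
      by (subst sum.reindex[OF inj(2)]) (auto intro!: sum.cong simp: power2_eq_square)
    show ?thesis using split e1 e2 G[of "(\<lambda>t. nat \<bar>t\<bar>) ` (T \<inter> {0..})"] G[of "(\<lambda>t. nat \<bar>t\<bar>) ` (T - {0..})"] T
      by simp
  qed
  then show ?thesis by blast
qed

lemma norm_iv_sq: "(norm (iv k))\<^sup>2 = (\<Sum>i\<in>UNIV. (real_of_int (k$i))\<^sup>2)"
  by (simp add: norm_vec_def L2_set_def real_sqrt_pow2 sum_nonneg)

lemma invpow_bound:
  "\<exists>Z. \<forall>F::(int^'n::finite) set. finite F \<longrightarrow> (\<Sum>k\<in>F-{0}. 1 / norm (iv k) ^ (2*CARD('n))) \<le> Z"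
proof -
  obtain G where G: "\<And>T. finite T \<Longrightarrow> (\<Sum>t\<in>T. 1 / (1 + (real_of_int t)\<^sup>2)) \<le> G"
    using int_sum_bound by blast
  let ?g = "\<lambda>i::'n. \<lambda>t::int. 1 / (1 + (real_of_int t)\<^sup>2)"
  have pt: "1 / norm (iv k) ^ (2*CARD('n)) \<le> 2 ^ CARD('n) * (\<Prod>i\<in>UNIV. ?g i (k$i))" if "k \<noteq> 0" for k :: "int^'n"
  proof -
    have n1: "1 \<le> (norm (iv k))\<^sup>2" using norm_iv_ge1[OF that] by (simp add: one_le_power)
    have c: "(real_of_int (k$i))\<^sup>2 \<le> (norm (iv k))\<^sup>2" for i
      using component_le_norm_cart[of "iv k" i] by (simp add: abs_le_square_iff[symmetric])
    have "(\<Prod>i\<in>UNIV. 1 + (real_of_int (k$i))\<^sup>2) \<le> (\<Prod>i\<in>(UNIV::'n set). 2 * (norm (iv k))\<^sup>2)"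
      by (rule prod_mono) (use c n1 in \<open>(intro conjI; (simp add: add_nonneg_nonneg)?); smt (verit)\<close>)
    also have "\<dots> = 2 ^ CARD('n) * norm (iv k) ^ (2*CARD('n))"
      by (simp add: power_mult_distrib power_mult)
    finally have P: "(\<Prod>i\<in>UNIV. 1 + (real_of_int (k$i))\<^sup>2) \<le> 2 ^ CARD('n) * norm (iv k) ^ (2*CARD('n))" .
    have pos: "0 < (\<Prod>i\<in>(UNIV::'n set). 1 + (real_of_int (k$i))\<^sup>2)"
      by (rule prod_pos) (auto intro: add_pos_nonneg)
    have np: "0 < norm (iv k)" using norm_iv_ge1[OF that] by linarith
    have "(\<Prod>i\<in>UNIV. ?g i (k$i)) = 1 / (\<Prod>i\<in>UNIV. 1 + (real_of_int (k$i))\<^sup>2)"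
      by (simp add: prod_dividef)
    have np2: "0 < norm (iv k) ^ (2*CARD('n))" using np by simp
    have "1 / norm (iv k) ^ (2*CARD('n)) \<le> 2 ^ CARD('n) / (\<Prod>i\<in>UNIV. 1 + (real_of_int (k$i))\<^sup>2)"
      using P pos np2 by (simp add: divide_simps)
    then show ?thesis using \<open>(\<Prod>i\<in>UNIV. ?g i (k$i)) = _\<close> by simp
  qed
  have "(\<Sum>k\<in>F-{0}. 1 / norm (iv k) ^ (2*CARD('n))) \<le> 2 ^ CARD('n) * G ^ CARD('n)" if F: "finite F" for F :: "(int^'n) set"
  proof -
    define T where "T = (\<lambda>i::'n. (\<lambda>k. k$i) ` F)"
    have fT: "finite (T i)" for i using F by (simp add: T_def)
    define B where "B = {k::int^'n. \<forall>i. k$i \<in> T i}"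
    have sub: "F - {0} \<subseteq> B" by (auto simp: B_def T_def)
    have fB: "finite B" unfolding B_def by (rule box_finite[OF fT])
    have gnn: "0 \<le> (\<Prod>i\<in>UNIV. ?g i (k$i))" for k :: "int^'n"
      by (rule prod_nonneg) (auto intro: add_pos_nonneg)
    have "(\<Sum>k\<in>F-{0}. 1 / norm (iv k) ^ (2*CARD('n))) \<le> (\<Sum>k\<in>F-{0}. 2 ^ CARD('n) * (\<Prod>i\<in>UNIV. ?g i (k$i)))"
      by (rule sum_mono) (use pt in auto)
    also have "\<dots> \<le> (\<Sum>k\<in>B. 2 ^ CARD('n) * (\<Prod>i\<in>UNIV. ?g i (k$i)))"
      by (rule sum_mono2[OF fB sub]) (simp add: gnn)
    also have "\<dots> = 2 ^ CARD('n) * (\<Prod>i\<in>UNIV. \<Sum>t\<in>T i. ?g i t)"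
      unfolding B_def using box_sum[OF fT, of ?g] by (simp add: sum_distrib_left[symmetric])
    also have "\<dots> \<le> 2 ^ CARD('n) * (\<Prod>i\<in>(UNIV::'n set). G)"
      by (intro mult_left_mono prod_mono) (auto intro!: sum_nonneg G fT intro: add_pos_nonneg)
    finally show ?thesis by simp
  qed
  then show ?thesis by blast
qed

lemma l2fin:
  assumes "l2_weighted_le n g C" "finite F"
  shows "(\<Sum>k\<in>F. (norm (iv k) ^ n * g k)\<^sup>2) \<le> C\<^sup>2"
proof -
  have sm: "(\<lambda>k. (norm (iv k) ^ n * g k)\<^sup>2) summable_on UNIV" and sq: "sqrt (\<Sum>\<^sub>\<infinity>k. (norm (iv k) ^ n * g k)\<^sup>2) \<le> C"
    using assms(1) unfolding l2_weighted_le_def by auto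
  have "(\<Sum>k\<in>F. (norm (iv k) ^ n * g k)\<^sup>2) \<le> (\<Sum>\<^sub>\<infinity>k. (norm (iv k) ^ n * g k)\<^sup>2)"
    by (rule finite_sum_le_infsum[OF sm assms(2)]) auto
  moreover have nn: "0 \<le> (\<Sum>\<^sub>\<infinity>k. (norm (iv k) ^ n * g k)\<^sup>2)" by (rule infsum_nonneg) auto
  moreover have "(\<Sum>\<^sub>\<infinity>k. (norm (iv k) ^ n * g k)\<^sup>2) \<le> C\<^sup>2"
  proof -
    let ?s = "(\<Sum>\<^sub>\<infinity>k. (norm (iv k) ^ n * g k)\<^sup>2)"
    have "?s = (sqrt ?s)\<^sup>2" using nn by simp
    also have "\<dots> \<le> C\<^sup>2" by (rule power_mono[OF sq]) (use nn in simp)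
    finally show ?thesis .
  qed
  ultimately show ?thesis by linarith
qed

lemma sq3: "((p::real) + q + r)\<^sup>2 \<le> 3 * (p\<^sup>2 + q\<^sup>2 + r\<^sup>2)"
proof -
  have "0 \<le> (p-q)\<^sup>2+(q-r)\<^sup>2+(p-r)\<^sup>2" by simp
  then show ?thesis by (simp add: power2_eq_square algebra_simps)
qed

lemma kin_dec:
  assumes "kinetic_hyp a a0 a1 R2"
  shows "\<forall>k x \<epsilon>. 0 < \<epsilon> \<and> \<epsilon> \<le> 1 \<longrightarrow> a k x \<epsilon> = a0 k x + \<epsilon> * a1 k x + R2 k x \<epsilon>"
  using assms unfolding kinetic_hyp_def by (elim conjE) assumption
lemma kin_sym:
  assumes "kinetic_hyp a a0 a1 R2"
  shows "\<forall>k x \<epsilon>. 0 < \<epsilon> \<and> \<epsilon> \<le> 1 \<longrightarrow> a k x \<epsilon> = a (- k) (x + \<epsilon> *\<^sub>R iv k) \<epsilon>"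
  using assms unfolding kinetic_hyp_def by (elim conjE) assumption
lemma kin_l2:
  assumes "kinetic_hyp a a0 a1 R2"
  shows "\<forall>n bs. set bs \<subseteq> Basis \<longrightarrow> (\<exists>C. \<forall>x.
        l2_weighted_le n (\<lambda>k. iter_pd bs (a0 k) x) C \<and>
        l2_weighted_le n (\<lambda>k. iter_pd bs (a1 k) x) C)"
  using assms unfolding kinetic_hyp_def by (elim conjE) assumption
lemma kin_l2r:
  assumes "kinetic_hyp a a0 a1 R2"
  shows "\<forall>n bs. set bs \<subseteq> Basis \<longrightarrow> (\<exists>C. \<forall>x \<epsilon>. 0 < \<epsilon> \<and> \<epsilon> \<le> 1 \<longrightarrow>
        l2_weighted_le n (\<lambda>k. iter_pd bs (\<lambda>y. R2 k y \<epsilon>) x) (C * \<epsilon>\<^sup>2))"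
  using assms unfolding kinetic_hyp_def by (elim conjE) assumption

lemma weighted_bound:
  assumes hyp: "kinetic_hyp a a0 a1 R2" and e: "0 < \<epsilon>" "\<epsilon> \<le> 1"
  shows "\<exists>B. \<forall>x F. finite F \<longrightarrow> (\<Sum>k\<in>F. (norm (iv k) ^ n * a k x \<epsilon>)\<^sup>2) \<le> B"
proof -
  have dec: "\<And>k x. a k x \<epsilon> = a0 k x + \<epsilon> * a1 k x + R2 k x \<epsilon>"
    using kin_dec[OF hyp] e by blast
  have "\<exists>C. \<forall>x. l2_weighted_le n (\<lambda>k. iter_pd [] (a0 k) x) C \<and> l2_weighted_le n (\<lambda>k. iter_pd [] (a1 k) x) C"
    using kin_l2[OF hyp, rule_format, of "[]" n] by simp
  then obtain C where C: "\<And>x. l2_weighted_le n (\<lambda>k. a0 k x) C" "\<And>x. l2_weighted_le n (\<lambda>k. a1 k x) C"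
    by auto
  have "\<exists>C. \<forall>x \<epsilon>. 0 < \<epsilon> \<and> \<epsilon> \<le> 1 \<longrightarrow> l2_weighted_le n (\<lambda>k. iter_pd [] (\<lambda>y. R2 k y \<epsilon>) x) (C * \<epsilon>\<^sup>2)"
    using kin_l2r[OF hyp, rule_format, of "[]" n] by simp
  then obtain C2 where C2: "\<And>x. l2_weighted_le n (\<lambda>k. R2 k x \<epsilon>) (C2 * \<epsilon>\<^sup>2)"
    using e by auto
  let ?w = "\<lambda>k. norm (iv k) ^ n"
  have "(\<Sum>k\<in>F. (?w k * a k x \<epsilon>)\<^sup>2) \<le> 3 * (C\<^sup>2 + C\<^sup>2 + (C2 * \<epsilon>\<^sup>2)\<^sup>2)" if F: "finite F" for x F
  proof -
    have pw: "(?w k * a k x \<epsilon>)\<^sup>2 \<le> 3 * ((?w k * a0 k x)\<^sup>2 + (?w k * a1 k x)\<^sup>2 + (?w k * R2 k x \<epsilon>)\<^sup>2)" for k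
    proof -
      have "(?w k * a k x \<epsilon>)\<^sup>2 = (?w k * a0 k x + \<epsilon> * (?w k * a1 k x) + ?w k * R2 k x \<epsilon>)\<^sup>2"
        by (simp add: dec algebra_simps)
      also have "\<dots> \<le> 3 * ((?w k * a0 k x)\<^sup>2 + (\<epsilon> * (?w k * a1 k x))\<^sup>2 + (?w k * R2 k x \<epsilon>)\<^sup>2)"
        by (rule sq3)
      also have "(\<epsilon> * (?w k * a1 k x))\<^sup>2 \<le> (?w k * a1 k x)\<^sup>2"
      proof -
        have "\<epsilon>\<^sup>2 \<le> 1" using e by (simp add: power_le_one)
        then show ?thesis using mult_left_le_one_le[of "(?w k * a1 k x)\<^sup>2" "\<epsilon>\<^sup>2"]
          by (simp add: power_mult_distrib)
      qed
      finally show ?thesis by simp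
    qed
    have "(\<Sum>k\<in>F. (?w k * a k x \<epsilon>)\<^sup>2) \<le> (\<Sum>k\<in>F. 3 * ((?w k * a0 k x)\<^sup>2 + (?w k * a1 k x)\<^sup>2 + (?w k * R2 k x \<epsilon>)\<^sup>2))"
      by (rule sum_mono) (rule pw)
    also have "\<dots> = 3 * ((\<Sum>k\<in>F. (?w k * a0 k x)\<^sup>2) + (\<Sum>k\<in>F. (?w k * a1 k x)\<^sup>2) + (\<Sum>k\<in>F. (?w k * R2 k x \<epsilon>)\<^sup>2))"
      by (simp add: sum.distrib sum_distrib_left)
    also have "\<dots> \<le> 3 * (C\<^sup>2 + C\<^sup>2 + (C2 * \<epsilon>\<^sup>2)\<^sup>2)"
      using l2fin[OF C(1)[of x] F] l2fin[OF C(2)[of x] F] l2fin[OF C2[of x] F] by simp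
    finally show ?thesis .
  qed
  then show ?thesis by (intro exI[of _ "3 * (C\<^sup>2 + C\<^sup>2 + (C2 * \<epsilon>\<^sup>2)\<^sup>2)"] allI impI)
qed

lemma coef_bound:
  assumes hyp: "kinetic_hyp a a0 a1 R2" and e: "0 < \<epsilon>" "\<epsilon> \<le> 1"
  shows "\<exists>K. \<forall>x F. finite F \<longrightarrow> (\<Sum>k\<in>F. \<bar>a k x \<epsilon>\<bar> * (1 + norm (iv (k::int^'n::finite)))) \<le> K"
proof -
  obtain B0 where B0: "\<And>x F. finite F \<Longrightarrow> (\<Sum>k\<in>F. (norm (iv k) ^ 0 * a k x \<epsilon>)\<^sup>2) \<le> B0"
    using weighted_bound[OF hyp e, of 0] by blast
  obtain Bm where Bm: "\<And>x F. finite F \<Longrightarrow> (\<Sum>k\<in>F. (norm (iv k) ^ (CARD('n)+1) * a k x \<epsilon>)\<^sup>2) \<le> Bm"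
    using weighted_bound[OF hyp e, of "CARD('n)+1"] by blast
  obtain Z where Z: "\<And>F::(int^'n) set. finite F \<Longrightarrow> (\<Sum>k\<in>F-{0}. 1 / norm (iv k) ^ (2*CARD('n))) \<le> Z"
    using invpow_bound by blast
  have "(\<Sum>k\<in>F. \<bar>a k x \<epsilon>\<bar> * (1 + norm (iv k))) \<le> (1 + B0) / 2 + (Bm + Z)" if F: "finite F" for x F
  proof -
    let ?f = "\<lambda>k. \<bar>a k x \<epsilon>\<bar> * (1 + norm (iv k))"
    have spl: "sum ?f F = sum ?f (F \<inter> {0}) + sum ?f (F - {0})" using F by (rule sum.Int_Diff)
    have "sum ?f (F \<inter> {0}) \<le> sum ?f {0}" by (rule sum_mono2) auto
    also have "\<dots> = \<bar>a 0 x \<epsilon>\<bar>" by simp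
    also have "\<dots> \<le> (1 + (a 0 x \<epsilon>)\<^sup>2) / 2"
    proof -
      have "0 \<le> (\<bar>a 0 x \<epsilon>\<bar> - 1)\<^sup>2" by simp
      then show ?thesis by (simp add: power2_eq_square algebra_simps)
    qed
    also have "(a 0 x \<epsilon>)\<^sup>2 \<le> B0" using B0[of "{0}" x] by simp
    finally have p0: "sum ?f (F \<inter> {0}) \<le> (1 + B0) / 2" by simp
    have pw: "?f k \<le> (norm (iv k) ^ (CARD('n)+1) * a k x \<epsilon>)\<^sup>2 + 1 / norm (iv k) ^ (2*CARD('n))"
      if "k \<in> F - {0}" for k
    proof -
      have n1: "1 \<le> norm (iv k)" using that norm_iv_ge1 by blast
      define u where "u = norm (iv k) ^ (CARD('n)+1) * \<bar>a k x \<epsilon>\<bar>"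
      define v where "v = 1 / norm (iv k) ^ CARD('n)"
      have uv: "u * v = \<bar>a k x \<epsilon>\<bar> * norm (iv k)"
        using n1 by (simp add: u_def v_def field_simps)
      have "?f k \<le> 2 * (\<bar>a k x \<epsilon>\<bar> * norm (iv k))"
        using n1 mult_right_mono[OF n1, of "\<bar>a k x \<epsilon>\<bar>"] by (simp add: algebra_simps)
      also have "\<dots> = 2 * (u * v)" by (simp add: uv)
      also have "\<dots> \<le> u\<^sup>2 + v\<^sup>2"
      proof -
        have "0 \<le> (u - v)\<^sup>2" by simp
        then show ?thesis by (simp add: power2_eq_square algebra_simps)
      qed
      also have "u\<^sup>2 = (norm (iv k) ^ (CARD('n)+1) * a k x \<epsilon>)\<^sup>2"
        by (simp add: u_def power_mult_distrib)
      also have "v\<^sup>2 = 1 / norm (iv k) ^ (2*CARD('n))"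
        by (simp add: v_def power_mult power_divide mult.commute)
      finally show ?thesis .
    qed
    have "sum ?f (F - {0}) \<le> (\<Sum>k\<in>F-{0}. (norm (iv k) ^ (CARD('n)+1) * a k x \<epsilon>)\<^sup>2 + 1 / norm (iv k) ^ (2*CARD('n)))"
      by (rule sum_mono) (rule pw)
    also have "\<dots> \<le> Bm + Z"
      using Bm[of "F - {0}" x] Z[of F] F by (simp add: sum.distrib)
    finally show ?thesis using spl p0 by linarith
  qed
  then show ?thesis by (intro exI[of _ "(1 + B0) / 2 + (Bm + Z)"] allI impI)
qed

definition pt :: "real \<Rightarrow> int^'n::finite \<Rightarrow> real^'n" where
  "pt \<epsilon> j = \<epsilon> *\<^sub>R iv j"

lemma lattice_pt: "lattice \<epsilon> = range (pt \<epsilon>)"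
  by (auto simp: lattice_def pt_def)

lemma pt_shift: "pt \<epsilon> j + \<epsilon> *\<^sub>R iv k = pt \<epsilon> (j + k)"
  by (simp add: pt_def iv_add scaleR_add_right)

lemma pt_diff: "pt \<epsilon> j - pt \<epsilon> j' = \<epsilon> *\<^sub>R iv (j - j')"
  by (simp add: pt_def iv_diff scaleR_diff_right)

lemma inj_pt: "\<epsilon> \<noteq> 0 \<Longrightarrow> inj (pt \<epsilon>)"
  using inj_iv by (auto simp: inj_on_def pt_def)

lemma infsum_fin_supp:
  fixes f :: "'a \<Rightarrow> real"
  assumes "finite F" "F \<subseteq> A" "\<And>x. x \<in> A \<Longrightarrow> x \<notin> F \<Longrightarrow> f x = 0"
  shows "infsum f A = sum f F"
proof -
  have "infsum f A = infsum f F" by (rule infsum_cong_neutral) (use assms in auto)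
  then show ?thesis using assms(1) by simp
qed

lemma lat_inner_fin:
  assumes e: "\<epsilon> \<noteq> 0" and S: "finite S" and supp: "\<And>x. v x \<noteq> 0 \<Longrightarrow> x \<in> pt \<epsilon> ` S"
  shows "lat_inner \<epsilon> u v = (\<Sum>j\<in>S. u (pt \<epsilon> j) * v (pt \<epsilon> j))"
proof -
  have "lat_inner \<epsilon> u v = sum (\<lambda>x. u x * v x) (pt \<epsilon> ` S)"
    unfolding lat_inner_def
    by (rule infsum_fin_supp) (use S supp in \<open>auto simp: lattice_pt\<close>)
  also have "\<dots> = (\<Sum>j\<in>S. u (pt \<epsilon> j) * v (pt \<epsilon> j))"
    by (subst sum.reindex) (use inj_pt[OF e] in \<open>auto simp: inj_on_def\<close>)
  finally show ?thesis .
qed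

lemma Top_fin:
  assumes e: "\<epsilon> \<noteq> 0" and S: "finite S" and supp: "\<And>x. u x \<noteq> 0 \<Longrightarrow> x \<in> pt \<epsilon> ` S"
  shows "Top a \<epsilon> u (pt \<epsilon> j) = (\<Sum>j'\<in>S. a (j' - j) (pt \<epsilon> j) \<epsilon> * u (pt \<epsilon> j'))"
proof -
  have "Top a \<epsilon> u (pt \<epsilon> j) = sum (\<lambda>k. a k (pt \<epsilon> j) \<epsilon> * u (pt \<epsilon> j + \<epsilon> *\<^sub>R iv k)) ((\<lambda>j'. j' - j) ` S)"
    unfolding Top_def
  proof (rule infsum_fin_supp)
    show "finite ((\<lambda>j'. j' - j) ` S)" using S by simp
    fix k assume "k \<notin> (\<lambda>j'. j' - j) ` S"
    then have "j + k \<notin> S" by (metis add_diff_cancel_left' image_eqI)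
    then have "pt \<epsilon> (j + k) \<notin> pt \<epsilon> ` S" using inj_pt[OF e] by (auto simp: inj_on_def)
    then have "u (pt \<epsilon> j + \<epsilon> *\<^sub>R iv k) = 0" using supp by (metis pt_shift)
    then show "a k (pt \<epsilon> j) \<epsilon> * u (pt \<epsilon> j + \<epsilon> *\<^sub>R iv k) = 0" by simp
  qed simp
  also have "\<dots> = (\<Sum>j'\<in>S. a (j' - j) (pt \<epsilon> j) \<epsilon> * u (pt \<epsilon> j'))"
    by (subst sum.reindex) (auto simp: inj_on_def pt_shift)
  finally show ?thesis .
qed

lemma Q_formula:
  assumes e: "\<epsilon> \<noteq> 0" and S: "finite S" and supp: "\<And>x. u x \<noteq> 0 \<Longrightarrow> x \<in> pt \<epsilon> ` S"
  shows "lat_inner \<epsilon> (Hop a V \<epsilon> u) u =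
    (\<Sum>j\<in>S. \<Sum>j'\<in>S. a (j' - j) (pt \<epsilon> j) \<epsilon> * u (pt \<epsilon> j') * u (pt \<epsilon> j))
    + (\<Sum>j\<in>S. V (pt \<epsilon> j) * (u (pt \<epsilon> j))\<^sup>2)"
proof -
  have "lat_inner \<epsilon> (Hop a V \<epsilon> u) u = (\<Sum>j\<in>S. Hop a V \<epsilon> u (pt \<epsilon> j) * u (pt \<epsilon> j))"
    by (rule lat_inner_fin[OF e S supp])
  also have "\<dots> = (\<Sum>j\<in>S. (\<Sum>j'\<in>S. a (j' - j) (pt \<epsilon> j) \<epsilon> * u (pt \<epsilon> j') * u (pt \<epsilon> j))
      + V (pt \<epsilon> j) * (u (pt \<epsilon> j))\<^sup>2)"
    by (rule sum.cong) (simp_all add: Hop_def Top_fin[OF e S supp] sum_distrib_right sum_distrib_left power2_eq_square algebra_simps)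
  finally show ?thesis by (simp add: sum.distrib)
qed

lemma schur:
  fixes f :: "'a \<Rightarrow> real"
  assumes S: "finite S" and gh: "\<And>j j'. j \<in> S \<Longrightarrow> j' \<in> S \<Longrightarrow> \<bar>g j j'\<bar> \<le> h j j'"
    and row: "\<And>j. j \<in> S \<Longrightarrow> (\<Sum>j'\<in>S. h j j') \<le> L"
    and col: "\<And>j'. j' \<in> S \<Longrightarrow> (\<Sum>j\<in>S. h j j') \<le> L"
  shows "\<bar>\<Sum>j\<in>S. \<Sum>j'\<in>S. g j j' * f j' * f j\<bar> \<le> L * (\<Sum>j\<in>S. (f j)\<^sup>2)"
proof -
  have pw: "\<bar>g j j' * f j' * f j\<bar> \<le> h j j' * (f j)\<^sup>2 / 2 + h j j' * (f j')\<^sup>2 / 2" if "j \<in> S" "j' \<in> S" for j j'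
  proof -
    have h0: "0 \<le> h j j'" using gh[OF that] by linarith
    have "\<bar>f j' * f j\<bar> \<le> ((f j)\<^sup>2 + (f j')\<^sup>2) / 2"
    proof -
      have "0 \<le> (\<bar>f j\<bar> - \<bar>f j'\<bar>)\<^sup>2" by simp
      then show ?thesis by (simp add: power2_eq_square algebra_simps abs_mult)
    qed
    then have "\<bar>g j j'\<bar> * \<bar>f j' * f j\<bar> \<le> h j j' * (((f j)\<^sup>2 + (f j')\<^sup>2) / 2)"
      using gh[OF that] h0 by (intro mult_mono) auto
    then show ?thesis by (simp add: abs_mult algebra_simps add_divide_distrib)
  qed
  have "\<bar>\<Sum>j\<in>S. \<Sum>j'\<in>S. g j j' * f j' * f j\<bar> \<le> (\<Sum>j\<in>S. \<Sum>j'\<in>S. \<bar>g j j' * f j' * f j\<bar>)"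
    by (rule order.trans[OF sum_abs]) (intro sum_mono sum_abs)
  also have "\<dots> \<le> (\<Sum>j\<in>S. \<Sum>j'\<in>S. h j j' * (f j)\<^sup>2 / 2 + h j j' * (f j')\<^sup>2 / 2)"
    by (intro sum_mono pw)
  also have "\<dots> = (\<Sum>j\<in>S. (\<Sum>j'\<in>S. h j j') * (f j)\<^sup>2) / 2 + (\<Sum>j'\<in>S. (\<Sum>j\<in>S. h j j') * (f j')\<^sup>2) / 2"
  proof -
    have A: "(\<Sum>j\<in>S. \<Sum>j'\<in>S. h j j' * (f j)\<^sup>2 / 2) = (\<Sum>j\<in>S. (\<Sum>j'\<in>S. h j j') * (f j)\<^sup>2) / 2"
      by (simp add: sum_divide_distrib sum_distrib_right)
    have B: "(\<Sum>j\<in>S. \<Sum>j'\<in>S. h j j' * (f j')\<^sup>2 / 2) = (\<Sum>j'\<in>S. (\<Sum>j\<in>S. h j j') * (f j')\<^sup>2) / 2"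
      by (subst sum.swap) (simp add: sum_divide_distrib sum_distrib_right)
    show ?thesis by (simp only: sum.distrib A B)
  qed
  also have "\<dots> \<le> (\<Sum>j\<in>S. L * (f j)\<^sup>2) / 2 + (\<Sum>j'\<in>S. L * (f j')\<^sup>2) / 2"
    by (intro add_mono divide_right_mono sum_mono mult_right_mono row col) auto
  also have "\<dots> = L * (\<Sum>j\<in>S. (f j)\<^sup>2)"
    by (simp add: sum_distrib_left)
  finally show ?thesis .
qed

definition cube :: "nat \<Rightarrow> (int^'n::finite) set" where
  "cube N = {c. \<forall>i. c$i \<in> {0..<int N}}"

lemma card_box:
  assumes "\<And>i. finite (T i)"
  shows "real (card {k::int^'n::finite. \<forall>i. k$i \<in> T i}) = (\<Prod>i\<in>UNIV. real (card (T i)))"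
  using box_sum[OF assms, of "\<lambda>i t. 1"] by simp

lemma finite_cube: "finite (cube N)"
  unfolding cube_def by (rule box_finite) simp

lemma card_cube: "real (card (cube N :: (int^'n::finite) set)) = real N ^ CARD('n)"
  unfolding cube_def using card_box[of "\<lambda>i. {0..<int N}"] by simp

lemma bad1_card:
  fixes s :: int
  shows "real (card {t \<in> {0..<int N}. t + s \<notin> {0..<int N}}) \<le> \<bar>real_of_int s\<bar>"
proof (cases "s \<ge> 0")
  case True
  have "{t \<in> {0..<int N}. t + s \<notin> {0..<int N}} \<subseteq> {int N - s..<int N}" using True by auto
  then have "card {t \<in> {0..<int N}. t + s \<notin> {0..<int N}} \<le> card {int N - s..<int N}"
    by (rule card_mono[rotated]) simp
  also have "\<dots> = nat s" by simp
  finally show ?thesis using True by simp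
next
  case False
  have "{t \<in> {0..<int N}. t + s \<notin> {0..<int N}} \<subseteq> {0..<- s}" using False by auto
  then have "card {t \<in> {0..<int N}. t + s \<notin> {0..<int N}} \<le> card {0..<-s}"
    by (rule card_mono[rotated]) simp
  also have "\<dots> = nat (-s)" by simp
  finally show ?thesis using False by simp
qed

lemma bad_i_card:
  fixes i :: "'n::finite" and k :: "int^'n"
  shows "real (card {c \<in> cube N. c$i + k$i \<notin> {0..<int N}}) \<le> \<bar>real_of_int (k$i)\<bar> * real N ^ (CARD('n::finite) - 1)"
proof -
  define T where "T = (\<lambda>l::'n. if l = i then {t \<in> {0..<int N}. t + k$i \<notin> {0..<int N}} else {0..<int N})"
  have fT: "finite (T l)" for l
    unfolding T_def by (rule finite_subset[where B="{0..<int N}"]) auto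
  have eq: "{c \<in> cube N. c$i + k$i \<notin> {0..<int N}} = {c::int^'n. \<forall>l. c$l \<in> T l}"
    by (auto simp: cube_def T_def split: if_splits)
  have "real (card {c::int^'n. \<forall>l. c$l \<in> T l}) = (\<Prod>l\<in>UNIV. real (card (T l)))"
    by (rule card_box[OF fT])
  also have "\<dots> = real (card (T i)) * (\<Prod>l\<in>UNIV-{i}. real (card (T l)))"
    by (rule prod.remove) simp_all
  also have "(\<Prod>l\<in>UNIV-{i}. real (card (T l))) = (\<Prod>l\<in>UNIV-{i}. real N)"
    by (rule prod.cong) (auto simp: T_def)
  also have "\<dots> = real N ^ (CARD('n) - 1)"
    by (simp add: card_Diff_singleton)
  finally have "real (card {c::int^'n. \<forall>l. c$l \<in> T l}) = real (card (T i)) * real N ^ (CARD('n) - 1)" .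
  moreover have "real (card (T i)) \<le> \<bar>real_of_int (k$i)\<bar>"
    using bad1_card[of N "k$i"] by (simp add: T_def)
  ultimately show ?thesis using eq by (simp add: mult_right_mono)
qed

lemma bad_card:
  fixes k :: "int^'n::finite"
  shows "real (card {c \<in> cube N. c + k \<notin> cube N}) \<le> real CARD('n::finite) * norm (iv k) * real N ^ (CARD('n) - 1)"
proof -
  have sub: "{c \<in> cube N. c + k \<notin> cube N} \<subseteq> (\<Union>i. {c \<in> cube N. c$i + k$i \<notin> {0..<int N}})"
    by (auto simp: cube_def)
  have "card {c \<in> cube N. c + k \<notin> cube N} \<le> card (\<Union>i. {c \<in> cube N. c$i + k$i \<notin> {0..<int N}})"
    by (rule card_mono[OF _ sub]) (simp add: finite_cube)
  also have "\<dots> \<le> (\<Sum>i\<in>UNIV. card {c \<in> cube N. c$i + k$i \<notin> {0..<int N}})"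
    by (rule card_UN_le) simp
  finally have "real (card {c \<in> cube N. c + k \<notin> cube N}) \<le> (\<Sum>i\<in>UNIV. real (card {c \<in> cube N. c$i + k$i \<notin> {0..<int N}}))"
    by (subst of_nat_sum[symmetric]) (simp only: of_nat_le_iff)
  also have "\<dots> \<le> (\<Sum>i\<in>(UNIV::'n set). norm (iv k) * real N ^ (CARD('n) - 1))"
  proof (rule sum_mono)
    fix i
    have "\<bar>real_of_int (k$i)\<bar> \<le> norm (iv k)" using component_le_norm_cart[of "iv k" i] by simp
    then show "real (card {c \<in> cube N. c$i + k$i \<notin> {0..<int N}}) \<le> norm (iv k) * real N ^ (CARD('n) - 1)"
      using bad_i_card[of N i k] by (meson mult_right_mono order.trans zero_le_power of_nat_0_le_iff)
  qed
  also have "\<dots> = real CARD('n) * norm (iv k) * real N ^ (CARD('n) - 1)" by simp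
  finally show ?thesis .
qed

lemma row_bound:
  assumes K: "\<And>x F. finite F \<Longrightarrow> (\<Sum>k\<in>F. \<bar>a k x \<epsilon>\<bar> * (1 + norm (iv k))) \<le> K" and S: "finite S"
  shows "(\<Sum>j'\<in>S. \<bar>a (j' - j) (pt \<epsilon> j) \<epsilon>\<bar> * (1 + norm (iv (j' - j)))) \<le> K"
proof -
  have "(\<Sum>j'\<in>S. \<bar>a (j' - j) (pt \<epsilon> j) \<epsilon>\<bar> * (1 + norm (iv (j' - j))))
      = (\<Sum>k\<in>(\<lambda>j'. j' - j) ` S. \<bar>a k (pt \<epsilon> j) \<epsilon>\<bar> * (1 + norm (iv k)))"
    by (subst sum.reindex) (auto simp: inj_on_def)
  also have "\<dots> \<le> K" using K S by simp
  finally show ?thesis .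
qed

lemma col_bound:
  assumes K: "\<And>x F. finite F \<Longrightarrow> (\<Sum>k\<in>F. \<bar>a k x \<epsilon>\<bar> * (1 + norm (iv k))) \<le> K" and S: "finite S"
    and sym: "\<And>k x. a k x \<epsilon> = a (- k) (x + \<epsilon> *\<^sub>R iv k) \<epsilon>"
  shows "(\<Sum>j\<in>S. \<bar>a (j' - j) (pt \<epsilon> j) \<epsilon>\<bar> * (1 + norm (iv (j' - j)))) \<le> K"
proof -
  have "(\<Sum>j\<in>S. \<bar>a (j' - j) (pt \<epsilon> j) \<epsilon>\<bar> * (1 + norm (iv (j' - j))))
      = (\<Sum>j\<in>S. \<bar>a (j - j') (pt \<epsilon> j') \<epsilon>\<bar> * (1 + norm (iv (j - j'))))"
  proof (rule sum.cong)
    fix j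
    have "a (j' - j) (pt \<epsilon> j) \<epsilon> = a (- (j' - j)) (pt \<epsilon> j + \<epsilon> *\<^sub>R iv (j' - j)) \<epsilon>" by (rule sym)
    also have "\<dots> = a (j - j') (pt \<epsilon> j') \<epsilon>" by (simp add: pt_shift)
    finally show "\<bar>a (j' - j) (pt \<epsilon> j) \<epsilon>\<bar> * (1 + norm (iv (j' - j))) = \<bar>a (j - j') (pt \<epsilon> j') \<epsilon>\<bar> * (1 + norm (iv (j - j')))"
      by (simp add: iv_diff norm_minus_commute)
  qed simp
  also have "\<dots> = (\<Sum>k\<in>(\<lambda>j. j - j') ` S. \<bar>a k (pt \<epsilon> j') \<epsilon>\<bar> * (1 + norm (iv k)))"
    by (subst sum.reindex) (auto simp: inj_on_def)
  also have "\<dots> \<le> K" using K S by simp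
  finally show ?thesis .
qed

lemma c0_supp:
  assumes e: "\<epsilon> \<noteq> 0" and "\<psi> \<in> c0 \<epsilon> D"
  shows "finite {j. \<psi> (pt \<epsilon> j) \<noteq> 0}" "\<And>y. \<psi> y \<noteq> 0 \<Longrightarrow> y \<in> pt \<epsilon> ` {j. \<psi> (pt \<epsilon> j) \<noteq> 0}"
    "\<And>j. \<psi> (pt \<epsilon> j) \<noteq> 0 \<Longrightarrow> pt \<epsilon> j \<in> D"
proof -
  have f: "finite {x. \<psi> x \<noteq> 0}" and sub: "{x. \<psi> x \<noteq> 0} \<subseteq> D \<inter> lattice \<epsilon>"
    using assms(2) by (auto simp: c0_def)
  have "{j. \<psi> (pt \<epsilon> j) \<noteq> 0} = pt \<epsilon> -` {x. \<psi> x \<noteq> 0}" by auto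
  then show "finite {j. \<psi> (pt \<epsilon> j) \<noteq> 0}" using finite_vimageI[OF f inj_pt[OF e]] by simp
  show "\<And>y. \<psi> y \<noteq> 0 \<Longrightarrow> y \<in> pt \<epsilon> ` {j. \<psi> (pt \<epsilon> j) \<noteq> 0}"
    using sub by (auto simp: lattice_pt)
  show "\<And>j. \<psi> (pt \<epsilon> j) \<noteq> 0 \<Longrightarrow> pt \<epsilon> j \<in> D" using sub by auto
qed

lemma c0_pos:
  assumes e: "\<epsilon> \<noteq> 0" and "\<psi> \<in> c0 \<epsilon> D" "\<psi> \<noteq> (\<lambda>_. 0)"
  shows "0 < lat_inner \<epsilon> \<psi> \<psi>"
proof -
  let ?S = "{j. \<psi> (pt \<epsilon> j) \<noteq> 0}"
  note cs = c0_supp[OF e assms(2)]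
  obtain y where "\<psi> y \<noteq> 0" using assms(3) by auto
  then obtain j where j: "j \<in> ?S" using cs(2) by blast
  have "lat_inner \<epsilon> \<psi> \<psi> = (\<Sum>j\<in>?S. \<psi> (pt \<epsilon> j) * \<psi> (pt \<epsilon> j))"
    by (rule lat_inner_fin[OF e cs(1) cs(2)])
  also have "\<dots> > 0"
    by (rule sum_pos2[OF cs(1) j]) (use j in \<open>auto simp: zero_less_mult_iff\<close>)
  finally show ?thesis .
qed

lemma bdd_LS:
  assumes e: "0 < \<epsilon>"
    and K: "\<And>x F. finite F \<Longrightarrow> (\<Sum>k\<in>F. \<bar>a k x \<epsilon>\<bar> * (1 + norm (iv k))) \<le> K"
    and sym: "\<And>k x. a k x \<epsilon> = a (- k) (x + \<epsilon> *\<^sub>R iv k) \<epsilon>"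
    and Vb: "\<And>y. y \<in> lattice \<epsilon> \<Longrightarrow> \<bar>V y\<bar> \<le> C * (1 + norm y) ^ Np"
  shows "bdd_below {lat_inner \<epsilon> (Hop a V \<epsilon> \<phi>) \<phi> / lat_inner \<epsilon> \<phi> \<phi> | \<phi>. \<phi> \<in> c0 \<epsilon> (ball_lat \<epsilon> (x::real^'n::finite) R) \<and> \<phi> \<noteq> (\<lambda>_. 0)}"
proof -
  define M where "M = \<bar>C\<bar> * (1 + norm x + R) ^ Np"
  have "- (K + M) \<le> lat_inner \<epsilon> (Hop a V \<epsilon> \<phi>) \<phi> / lat_inner \<epsilon> \<phi> \<phi>"
    if \<phi>: "\<phi> \<in> c0 \<epsilon> (ball_lat \<epsilon> x R)" "\<phi> \<noteq> (\<lambda>_. 0)" for \<phi>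
  proof -
    have e0: "\<epsilon> \<noteq> 0" using e by simp
    let ?S = "{j. \<phi> (pt \<epsilon> j) \<noteq> 0}"
    let ?f = "\<lambda>j. \<phi> (pt \<epsilon> j)"
    note cs = c0_supp[OF e0 \<phi>(1)]
    have W: "lat_inner \<epsilon> \<phi> \<phi> = (\<Sum>j\<in>?S. (?f j)\<^sup>2)"
      using lat_inner_fin[OF e0 cs(1) cs(2)] by (simp add: power2_eq_square)
    have Wp: "0 < lat_inner \<epsilon> \<phi> \<phi>" by (rule c0_pos[OF e0 \<phi>])
    have Q: "lat_inner \<epsilon> (Hop a V \<epsilon> \<phi>) \<phi> = (\<Sum>j\<in>?S. \<Sum>j'\<in>?S. a (j' - j) (pt \<epsilon> j) \<epsilon> * ?f j' * ?f j)
        + (\<Sum>j\<in>?S. V (pt \<epsilon> j) * (?f j)\<^sup>2)"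
      by (rule Q_formula[OF e0 cs(1) cs(2)])
    have kin: "\<bar>\<Sum>j\<in>?S. \<Sum>j'\<in>?S. a (j' - j) (pt \<epsilon> j) \<epsilon> * ?f j' * ?f j\<bar> \<le> K * (\<Sum>j\<in>?S. (?f j)\<^sup>2)"
    proof (rule schur[OF cs(1), where h="\<lambda>j j'. \<bar>a (j' - j) (pt \<epsilon> j) \<epsilon>\<bar> * (1 + norm (iv (j' - j)))"
        and g="\<lambda>j j'. a (j' - j) (pt \<epsilon> j) \<epsilon>" and f="?f"])
      fix j j'
      show "\<bar>a (j' - j) (pt \<epsilon> j) \<epsilon>\<bar> \<le> \<bar>a (j' - j) (pt \<epsilon> j) \<epsilon>\<bar> * (1 + norm (iv (j' - j)))"
        using mult_left_mono[of 1 "1 + norm (iv (j' - j))" "\<bar>a (j' - j) (pt \<epsilon> j) \<epsilon>\<bar>"] by simp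
    next
      fix j show "(\<Sum>j'\<in>?S. \<bar>a (j' - j) (pt \<epsilon> j) \<epsilon>\<bar> * (1 + norm (iv (j' - j)))) \<le> K"
        by (rule row_bound[where a=a and K=K, OF K cs(1)])
    next
      fix j' show "(\<Sum>j\<in>?S. \<bar>a (j' - j) (pt \<epsilon> j) \<epsilon>\<bar> * (1 + norm (iv (j' - j)))) \<le> K"
        by (rule col_bound[where a=a and K=K, OF K cs(1) sym])
    qed
    have pot: "- M * (?f j)\<^sup>2 \<le> V (pt \<epsilon> j) * (?f j)\<^sup>2" if "j \<in> ?S" for j
    proof -
      have "pt \<epsilon> j \<in> ball_lat \<epsilon> x R" using cs(3) that by simp
      then have nb: "norm (pt \<epsilon> j) \<le> norm x + R"
        unfolding ball_lat_def using norm_triangle_ineq3[of x "pt \<epsilon> j"]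
        by (smt (verit) mem_Collect_eq norm_minus_commute norm_triangle_ineq2)
      have "\<bar>V (pt \<epsilon> j)\<bar> \<le> C * (1 + norm (pt \<epsilon> j)) ^ Np" by (rule Vb) (simp add: lattice_pt)
      also have "\<dots> \<le> \<bar>C\<bar> * (1 + norm (pt \<epsilon> j)) ^ Np" by (intro mult_right_mono) auto
      also have "\<dots> \<le> M" unfolding M_def by (intro mult_left_mono power_mono) (use nb in auto)
      finally have "- M \<le> V (pt \<epsilon> j)" by linarith
      then show ?thesis by (intro mult_right_mono) auto
    qed
    have "(\<Sum>j\<in>?S. - M * (?f j)\<^sup>2) \<le> (\<Sum>j\<in>?S. V (pt \<epsilon> j) * (?f j)\<^sup>2)"
      by (rule sum_mono) (rule pot)
    then have "- M * lat_inner \<epsilon> \<phi> \<phi> \<le> (\<Sum>j\<in>?S. V (pt \<epsilon> j) * (?f j)\<^sup>2)"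
      by (simp add: W sum_distrib_left)
    with kin Q W have "- (K + M) * lat_inner \<epsilon> \<phi> \<phi> \<le> lat_inner \<epsilon> (Hop a V \<epsilon> \<phi>) \<phi>"
      by (simp add: algebra_simps)
    then show ?thesis using Wp by (simp add: le_divide_eq)
  qed
  then show ?thesis unfolding bdd_below_def by blast
qed

lemma Lambda_le:
  assumes e: "0 < \<epsilon>"
    and K: "\<And>x F. finite F \<Longrightarrow> (\<Sum>k\<in>F. \<bar>a k x \<epsilon>\<bar> * (1 + norm (iv k))) \<le> K"
    and sym: "\<And>k x. a k x \<epsilon> = a (- k) (x + \<epsilon> *\<^sub>R iv k) \<epsilon>"
    and Vb: "\<And>y. y \<in> lattice \<epsilon> \<Longrightarrow> \<bar>V y\<bar> \<le> C * (1 + norm y) ^ Np"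
    and \<psi>: "\<psi> \<in> c0 \<epsilon> (ball_lat \<epsilon> (x::real^'n::finite) R)" "\<psi> \<noteq> (\<lambda>_. 0)"
  shows "LambdaR a V \<epsilon> R x * lat_inner \<epsilon> \<psi> \<psi> \<le> lat_inner \<epsilon> (Hop a V \<epsilon> \<psi>) \<psi>"
proof -
  have Wp: "0 < lat_inner \<epsilon> \<psi> \<psi>" by (rule c0_pos[OF _ \<psi>]) (use e in simp)
  have "LambdaR a V \<epsilon> R x \<le> lat_inner \<epsilon> (Hop a V \<epsilon> \<psi>) \<psi> / lat_inner \<epsilon> \<psi> \<psi>"
    unfolding LambdaR_def
    by (rule cInf_lower[OF _ bdd_LS[where a=a and V=V and K=K and C=C and Np=Np, OF e K sym Vb]]) (use \<psi> in blast)
  then show ?thesis using Wp by (simp add: le_divide_eq)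
qed

lemma sum_ind:
  assumes "finite A"
  shows "(\<Sum>y\<in>A. if P y then (1::real) else 0) = real (card {y\<in>A. P y})"
proof -
  have "(\<Sum>y\<in>A. if P y then (1::real) else 0) = (\<Sum>y\<in>{y\<in>A. P y}. 1)"
    using assms by (simp add: sum.If_cases Int_def conj_commute)
  then show ?thesis by simp
qed

lemma card_split:
  assumes "finite A"
  shows "real (card {c\<in>A. P c}) = real (card A) - real (card {c\<in>A. \<not> P c})"
proof -
  have "A = {c\<in>A. P c} \<union> {c\<in>A. \<not> P c}" by auto
  then have "card A = card {c\<in>A. P c} + card {c\<in>A. \<not> P c}"
    using assms by (metis (no_types, lifting) card_Un_disjoint disjoint_iff finite_Un mem_Collect_eq)
  then show ?thesis by simp
qed

lemma norm_iv_le: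
  assumes "\<And>i. \<bar>k $ i\<bar> \<le> int N"
  shows "norm (iv (k::int^'n::finite)) \<le> real CARD('n) * real N"
proof -
  have "norm (iv k) \<le> (\<Sum>i\<in>UNIV. \<bar>iv k $ i\<bar>)" by (rule norm_le_l1_cart)
  also have "\<dots> \<le> (\<Sum>i\<in>(UNIV::'n set). real N)"
  proof (rule sum_mono)
    fix i show "\<bar>iv k $ i\<bar> \<le> real N" using assms[of i] by simp
  qed
  also have "\<dots> = real CARD('n) * real N" by simp
  finally show ?thesis .
qed

lemma IMS:
  fixes a :: "int^'n::finite \<Rightarrow> real^'n \<Rightarrow> real \<Rightarrow> real" and V :: "real^'n \<Rightarrow> real"
    and \<phi> :: "real^'n \<Rightarrow> real"
  assumes e: "0 < \<epsilon>"
    and K: "\<And>x F. finite F \<Longrightarrow> (\<Sum>k\<in>F. \<bar>a k x \<epsilon>\<bar> * (1 + norm (iv k))) \<le> K"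
    and sym: "\<And>k x. a k x \<epsilon> = a (- k) (x + \<epsilon> *\<^sub>R iv k) \<epsilon>"
    and Vb: "\<And>y. y \<in> lattice \<epsilon> \<Longrightarrow> \<bar>V y\<bar> \<le> C * (1 + norm y) ^ Np"
    and N: "1 \<le> N" and Rb: "\<epsilon> * (real CARD('n) * real N) < R"
    and \<phi>: "\<phi> \<in> c0 \<epsilon> UNIV"
  shows "(\<Sum>j\<in>{j. \<phi> (pt \<epsilon> j) \<noteq> 0}. LambdaR a V \<epsilon> R (pt \<epsilon> j) * (\<phi> (pt \<epsilon> j))\<^sup>2)
     - real CARD('n) * K / real N * (\<Sum>j\<in>{j. \<phi> (pt \<epsilon> j) \<noteq> 0}. (\<phi> (pt \<epsilon> j))\<^sup>2)
     \<le> lat_inner \<epsilon> (Hop a V \<epsilon> \<phi>) \<phi>"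
proof -
  have e0: "\<epsilon> \<noteq> 0" using e by simp
  define S where "S = {j. \<phi> (pt \<epsilon> j) \<noteq> 0}"
  define f where "f = (\<lambda>j. \<phi> (pt \<epsilon> j))"
  note cs = c0_supp[OF e0 \<phi>]
  have fS: "finite S" and suppS: "\<And>y. \<phi> y \<noteq> 0 \<Longrightarrow> y \<in> pt \<epsilon> ` S"
    using cs(1,2) by (auto simp: S_def)
  define Cb where "Cb = (cube N :: (int^'n) set)"
  have fC: "finite Cb" by (simp add: Cb_def finite_cube)
  define d where "d = CARD('n)"
  define nC where "nC = real (card Cb)"
  have nC: "nC = real N ^ d" by (simp add: nC_def Cb_def d_def card_cube)
  define ch where "ch = (\<lambda>y j. if j - y \<in> Cb then (1::real) else 0)"
  define \<psi> where "\<psi> = (\<lambda>y x. if x \<in> pt \<epsilon> ` ((\<lambda>c. y + c) ` Cb) then \<phi> x else 0)"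
  have chi_sq: "(ch y j)\<^sup>2 = ch y j" for y j by (simp add: ch_def)
  have \<psi>v: "\<psi> y (pt \<epsilon> j) = ch y j * f j" for y j
  proof -
    have "pt \<epsilon> j \<in> pt \<epsilon> ` ((\<lambda>c. y + c) ` Cb) \<longleftrightarrow> j \<in> (\<lambda>c. y + c) ` Cb"
      using inj_pt[OF e0] by (auto simp: inj_on_def)
    also have "\<dots> \<longleftrightarrow> j - y \<in> Cb" by (auto simp: image_iff) (metis add.commute diff_add_cancel)
    finally show ?thesis by (simp add: \<psi>_def ch_def f_def)
  qed
  have \<psi>supp: "\<And>x. \<psi> y x \<noteq> 0 \<Longrightarrow> x \<in> pt \<epsilon> ` S" for y
    using suppS by (auto simp: \<psi>_def split: if_splits)
  define b where "b = (\<lambda>j j'. a (j' - j) (pt \<epsilon> j) \<epsilon>)"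
  define Q where "Q = (\<lambda>u. lat_inner \<epsilon> (Hop a V \<epsilon> u) u)"
  have Q\<psi>: "Q (\<psi> y) = (\<Sum>j\<in>S. \<Sum>j'\<in>S. b j j' * (ch y j' * f j') * (ch y j * f j))
      + (\<Sum>j\<in>S. V (pt \<epsilon> j) * (ch y j * f j)\<^sup>2)" for y
    using Q_formula[where a=a and V=V, OF e0 fS \<psi>supp[of y]] by (simp add: Q_def b_def \<psi>v)
  have Q\<phi>: "Q \<phi> = (\<Sum>j\<in>S. \<Sum>j'\<in>S. b j j' * f j' * f j) + (\<Sum>j\<in>S. V (pt \<epsilon> j) * (f j)\<^sup>2)"
    using Q_formula[where a=a and V=V, OF e0 fS suppS] by (simp add: Q_def b_def f_def)
  define Y where "Y = (\<lambda>(j, c). j - c) ` (S \<times> Cb)"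
  have fY: "finite Y" using fS fC by (simp add: Y_def)
  define E where "E = (\<lambda>k. real (card {c \<in> Cb. c + k \<notin> Cb}))"
  have cnt2: "(\<Sum>y\<in>Y. ch y j' * ch y j) = nC - E (j' - j)" if j: "j \<in> S" for j j'
  proof -
    have "(\<Sum>y\<in>Y. ch y j' * ch y j) = (\<Sum>y\<in>Y. if j - y \<in> Cb \<and> j' - y \<in> Cb then 1 else 0)"
      by (rule sum.cong) (auto simp: ch_def)
    also have "\<dots> = real (card {y\<in>Y. j - y \<in> Cb \<and> j' - y \<in> Cb})" by (rule sum_ind[OF fY])
    also have "{y\<in>Y. j - y \<in> Cb \<and> j' - y \<in> Cb} = (\<lambda>c. j - c) ` {c\<in>Cb. c + (j' - j) \<in> Cb}"
    proof (rule set_eqI, rule iffI)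
      fix y assume "y \<in> {y\<in>Y. j - y \<in> Cb \<and> j' - y \<in> Cb}"
      then show "y \<in> (\<lambda>c. j - c) ` {c\<in>Cb. c + (j' - j) \<in> Cb}"
        by (intro image_eqI[of _ _ "j - y"]) (auto simp: algebra_simps)
    next
      fix y assume "y \<in> (\<lambda>c. j - c) ` {c\<in>Cb. c + (j' - j) \<in> Cb}"
      then obtain c where c: "c \<in> Cb" "c + (j' - j) \<in> Cb" "y = j - c" by auto
      have "y \<in> Y" unfolding Y_def using j c by (auto intro!: image_eqI[of _ _ "(j, c)"])
      then show "y \<in> {y\<in>Y. j - y \<in> Cb \<and> j' - y \<in> Cb}" using c by (auto simp: algebra_simps)
    qed
    also have "card ((\<lambda>c. j - c) ` {c\<in>Cb. c + (j' - j) \<in> Cb}) = card {c\<in>Cb. c + (j' - j) \<in> Cb}"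
      by (rule card_image) (auto simp: inj_on_def)
    also have "real (card {c\<in>Cb. c + (j' - j) \<in> Cb}) = nC - E (j' - j)"
      unfolding nC_def E_def by (rule card_split[OF fC])
    finally show ?thesis .
  qed
  have cnt1: "(\<Sum>y\<in>Y. ch y j) = nC" if j: "j \<in> S" for j
  proof -
    have "(\<Sum>y\<in>Y. ch y j) = (\<Sum>y\<in>Y. ch y j * ch y j)"
      by (rule sum.cong) (auto simp: ch_def)
    also have "\<dots> = nC - E (j - j)" by (rule cnt2[OF j])
    also have "E (j - j) = 0" by (simp add: E_def)
    finally show ?thesis by simp
  qed
  have A: "(\<Sum>y\<in>Y. Q (\<psi> y)) = (\<Sum>j\<in>S. \<Sum>j'\<in>S. b j j' * f j' * f j * (\<Sum>y\<in>Y. ch y j' * ch y j))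
      + (\<Sum>j\<in>S. V (pt \<epsilon> j) * (f j)\<^sup>2 * (\<Sum>y\<in>Y. ch y j))"
  proof -
    have 1: "(\<Sum>y\<in>Y. \<Sum>j\<in>S. \<Sum>j'\<in>S. b j j' * (ch y j' * f j') * (ch y j * f j))
        = (\<Sum>j\<in>S. \<Sum>j'\<in>S. b j j' * f j' * f j * (\<Sum>y\<in>Y. ch y j' * ch y j))"
    proof -
      have "(\<Sum>y\<in>Y. \<Sum>j\<in>S. \<Sum>j'\<in>S. b j j' * (ch y j' * f j') * (ch y j * f j))
          = (\<Sum>j\<in>S. \<Sum>y\<in>Y. \<Sum>j'\<in>S. b j j' * (ch y j' * f j') * (ch y j * f j))"
        by (rule sum.swap)
      also have "\<dots> = (\<Sum>j\<in>S. \<Sum>j'\<in>S. \<Sum>y\<in>Y. b j j' * (ch y j' * f j') * (ch y j * f j))"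
        by (rule sum.cong[OF refl], rule sum.swap)
      also have "\<dots> = (\<Sum>j\<in>S. \<Sum>j'\<in>S. b j j' * f j' * f j * (\<Sum>y\<in>Y. ch y j' * ch y j))"
        by (intro sum.cong refl) (simp add: sum_distrib_left mult_ac)
      finally show ?thesis .
    qed
    have 2: "(\<Sum>y\<in>Y. \<Sum>j\<in>S. V (pt \<epsilon> j) * (ch y j * f j)\<^sup>2)
        = (\<Sum>j\<in>S. V (pt \<epsilon> j) * (f j)\<^sup>2 * (\<Sum>y\<in>Y. ch y j))"
    proof -
      have "(\<Sum>y\<in>Y. \<Sum>j\<in>S. V (pt \<epsilon> j) * (ch y j * f j)\<^sup>2) = (\<Sum>j\<in>S. \<Sum>y\<in>Y. V (pt \<epsilon> j) * (ch y j * f j)\<^sup>2)"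
        by (rule sum.swap)
      also have "\<dots> = (\<Sum>j\<in>S. V (pt \<epsilon> j) * (f j)\<^sup>2 * (\<Sum>y\<in>Y. ch y j))"
        by (intro sum.cong refl) (simp add: sum_distrib_left sum_distrib_right power_mult_distrib chi_sq mult_ac)
      finally show ?thesis .
    qed
    show ?thesis unfolding Q\<psi> sum.distrib 1 2 ..
  qed
  have A2: "(\<Sum>y\<in>Y. Q (\<psi> y)) = (\<Sum>j\<in>S. \<Sum>j'\<in>S. b j j' * f j' * f j * (nC - E (j' - j)))
      + (\<Sum>j\<in>S. V (pt \<epsilon> j) * (f j)\<^sup>2 * nC)"
    unfolding A by (intro arg_cong2[where f="(+)"] sum.cong refl) (simp_all add: cnt1 cnt2)
  have D: "nC * Q \<phi> = (\<Sum>y\<in>Y. Q (\<psi> y)) + (\<Sum>j\<in>S. \<Sum>j'\<in>S. (b j j' * E (j' - j)) * f j' * f j)"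
    unfolding A2 Q\<phi>
    by (simp add: sum_distrib_left right_diff_distrib sum_subtractf algebra_simps)
  have memb: "\<psi> y \<in> c0 \<epsilon> (ball_lat \<epsilon> (pt \<epsilon> j) R)" if jy: "j - y \<in> Cb" for y j
  proof -
    have sub: "{x. \<psi> y x \<noteq> 0} \<subseteq> {x. \<phi> x \<noteq> 0}" by (auto simp: \<psi>_def)
    have fin: "finite {x. \<phi> x \<noteq> 0}" using \<phi> by (simp add: c0_def)
    have inb: "x \<in> ball_lat \<epsilon> (pt \<epsilon> j) R \<inter> lattice \<epsilon>" if "\<psi> y x \<noteq> 0" for x
    proof -
      from that obtain c where c: "c \<in> Cb" "x = pt \<epsilon> (y + c)" by (auto simp: \<psi>_def split: if_splits)
      have comp: "\<bar>(j - (y + c)) $ i\<bar> \<le> int N" for i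
      proof -
        have h1: "0 \<le> (j - y) $ i \<and> (j - y) $ i < int N" using jy unfolding Cb_def cube_def mem_Collect_eq atLeastLessThan_iff by blast
        have h2: "0 \<le> c $ i \<and> c $ i < int N" using c(1) unfolding Cb_def cube_def mem_Collect_eq atLeastLessThan_iff by blast
        show ?thesis using h1 h2 by (simp add: abs_le_iff)
      qed
      have "norm (pt \<epsilon> j - x) = \<epsilon> * norm (iv (j - (y + c)))" using e by (simp add: c(2) pt_diff)
      also have "\<dots> \<le> \<epsilon> * (real CARD('n) * real N)" using norm_iv_le[OF comp] e by (intro mult_left_mono) auto
      also have "\<dots> < R" by (rule Rb)
      finally show ?thesis by (auto simp: ball_lat_def lattice_pt c(2))
    qed
    show ?thesis unfolding c0_def using finite_subset[OF sub fin] inb by auto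
  qed
  have loc: "(\<Sum>j\<in>S. LambdaR a V \<epsilon> R (pt \<epsilon> j) * (ch y j * (f j)\<^sup>2)) \<le> Q (\<psi> y)" for y
  proof -
    let ?w = "\<lambda>j. (ch y j * f j)\<^sup>2"
    let ?L = "\<lambda>j. LambdaR a V \<epsilon> R (pt \<epsilon> j)"
    have ww: "ch y j * (f j)\<^sup>2 = ?w j" for j by (simp add: power_mult_distrib chi_sq)
    have W: "lat_inner \<epsilon> (\<psi> y) (\<psi> y) = (\<Sum>j\<in>S. ?w j)"
      using lat_inner_fin[OF e0 fS \<psi>supp[of y]] by (simp add: \<psi>v power2_eq_square)
    show ?thesis
    proof (cases "\<exists>j\<in>S. ?w j \<noteq> 0")
      case False
      then have z: "ch y j * f j = 0" if "j \<in> S" for j using that by simp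
      have "Q (\<psi> y) = 0" unfolding Q\<psi> by (simp add: z)
      moreover have "(\<Sum>j\<in>S. ?L j * (ch y j * (f j)\<^sup>2)) = 0" by (simp add: ww z)
      ultimately show ?thesis by simp
    next
      case True
      then obtain j0 where j0: "j0 \<in> S" "?w j0 \<noteq> 0" by blast
      have Wp: "0 < (\<Sum>j\<in>S. ?w j)" by (rule sum_pos2[OF fS j0(1)]) (use j0(2) in auto)
      have key: "?L j * (\<Sum>j\<in>S. ?w j) \<le> Q (\<psi> y)" if "?w j \<noteq> 0" for j
      proof -
        have "ch y j \<noteq> 0" using that by auto
        then have jy: "j - y \<in> Cb" by (simp add: ch_def split: if_splits)
        have ne: "\<psi> y \<noteq> (\<lambda>_. 0)"
        proof
          assume "\<psi> y = (\<lambda>_. 0)"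
          then have "\<psi> y (pt \<epsilon> j) = 0" by simp
          with \<psi>v that show False by simp
        qed
        show ?thesis unfolding Q_def W[symmetric]
          by (rule Lambda_le[where a=a and V=V and K=K and C=C and Np=Np, OF e K sym Vb memb[OF jy] ne])
      qed
      have "(\<Sum>j\<in>S. ?L j * ?w j) * (\<Sum>j\<in>S. ?w j) = (\<Sum>j\<in>S. ?w j * (?L j * (\<Sum>j\<in>S. ?w j)))"
        by (subst sum_distrib_right) (simp add: mult_ac)
      also have "\<dots> \<le> (\<Sum>j\<in>S. ?w j * Q (\<psi> y))"
      proof (rule sum_mono)
        fix j show "?w j * (?L j * (\<Sum>j\<in>S. ?w j)) \<le> ?w j * Q (\<psi> y)"
        proof (cases "?w j = 0")
          case True then show ?thesis by (simp only: True mult_zero_left order_refl)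
        next
          case False then show ?thesis by (intro mult_left_mono key) simp_all
        qed
      qed
      also have "\<dots> = Q (\<psi> y) * (\<Sum>j\<in>S. ?w j)" by (simp add: sum_distrib_left mult_ac)
      finally have "(\<Sum>j\<in>S. ?L j * ?w j) \<le> Q (\<psi> y)" using Wp by simp
      then show ?thesis by (simp add: ww)
    qed
  qed
  have LB: "nC * (\<Sum>j\<in>S. LambdaR a V \<epsilon> R (pt \<epsilon> j) * (f j)\<^sup>2) \<le> (\<Sum>y\<in>Y. Q (\<psi> y))"
  proof -
    have "(\<Sum>y\<in>Y. \<Sum>j\<in>S. LambdaR a V \<epsilon> R (pt \<epsilon> j) * (ch y j * (f j)\<^sup>2))
        = (\<Sum>j\<in>S. \<Sum>y\<in>Y. LambdaR a V \<epsilon> R (pt \<epsilon> j) * (ch y j * (f j)\<^sup>2))"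
      by (rule sum.swap)
    also have "\<dots> = (\<Sum>j\<in>S. LambdaR a V \<epsilon> R (pt \<epsilon> j) * (f j)\<^sup>2 * (\<Sum>y\<in>Y. ch y j))"
      by (intro sum.cong refl) (simp add: sum_distrib_left sum_distrib_right mult_ac)
    also have "\<dots> = nC * (\<Sum>j\<in>S. LambdaR a V \<epsilon> R (pt \<epsilon> j) * (f j)\<^sup>2)"
      by (simp add: sum_distrib_left cnt1 mult_ac cong: sum.cong)
    finally have eq: "(\<Sum>y\<in>Y. \<Sum>j\<in>S. LambdaR a V \<epsilon> R (pt \<epsilon> j) * (ch y j * (f j)\<^sup>2))
        = nC * (\<Sum>j\<in>S. LambdaR a V \<epsilon> R (pt \<epsilon> j) * (f j)\<^sup>2)" .
    have "(\<Sum>y\<in>Y. \<Sum>j\<in>S. LambdaR a V \<epsilon> R (pt \<epsilon> j) * (ch y j * (f j)\<^sup>2)) \<le> (\<Sum>y\<in>Y. Q (\<psi> y))"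
      by (rule sum_mono) (rule loc)
    then show ?thesis by (simp add: eq)
  qed
  define c where "c = real d * real N ^ (d - 1)"
  have cnn: "0 \<le> c" by (simp add: c_def)
  have E0: "0 \<le> E k" for k by (simp add: E_def)
  have Eb: "E k \<le> (1 + norm (iv k)) * c" for k
  proof -
    have "E k \<le> real d * norm (iv k) * real N ^ (d - 1)"
      using bad_card[of N k] by (simp add: E_def Cb_def d_def)
    also have "\<dots> = norm (iv k) * c" by (simp add: c_def)
    also have "\<dots> \<le> (1 + norm (iv k)) * c" by (intro mult_right_mono cnn) simp
    finally show ?thesis .
  qed
  have err: "\<bar>\<Sum>j\<in>S. \<Sum>j'\<in>S. (b j j' * E (j' - j)) * f j' * f j\<bar> \<le> (K * c) * (\<Sum>j\<in>S. (f j)\<^sup>2)"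
  proof (rule schur[OF fS, where h="\<lambda>j j'. \<bar>b j j'\<bar> * (1 + norm (iv (j' - j))) * c"
      and g="\<lambda>j j'. b j j' * E (j' - j)" and f=f])
    fix j j'
    show "\<bar>b j j' * E (j' - j)\<bar> \<le> \<bar>b j j'\<bar> * (1 + norm (iv (j' - j))) * c"
      using mult_left_mono[OF Eb[of "j' - j"], of "\<bar>b j j'\<bar>"] E0[of "j' - j"]
      by (simp add: abs_mult mult_ac)
  next
    fix j
    have "(\<Sum>j'\<in>S. \<bar>b j j'\<bar> * (1 + norm (iv (j' - j))) * c) = (\<Sum>j'\<in>S. \<bar>b j j'\<bar> * (1 + norm (iv (j' - j)))) * c"
      by (simp add: sum_distrib_right)
    also have "\<dots> \<le> K * c"
      by (intro mult_right_mono cnn) (unfold b_def, rule row_bound[where a=a and K=K, OF K fS])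
    finally show "(\<Sum>j'\<in>S. \<bar>b j j'\<bar> * (1 + norm (iv (j' - j))) * c) \<le> K * c" .
  next
    fix j'
    have "(\<Sum>j\<in>S. \<bar>b j j'\<bar> * (1 + norm (iv (j' - j))) * c) = (\<Sum>j\<in>S. \<bar>b j j'\<bar> * (1 + norm (iv (j' - j)))) * c"
      by (simp add: sum_distrib_right)
    also have "\<dots> \<le> K * c"
      by (intro mult_right_mono cnn) (unfold b_def, rule col_bound[where a=a and K=K, OF K fS sym])
    finally show "(\<Sum>j\<in>S. \<bar>b j j'\<bar> * (1 + norm (iv (j' - j))) * c) \<le> K * c" .
  qed
  define P where "P = real N ^ (d - 1)"
  have Pp: "0 < P" using N by (simp add: P_def)
  have d1: "1 \<le> d" by (simp add: d_def)
  have nCP: "nC = real N * P"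
    using d1 by (simp add: nC P_def power_Suc[symmetric])
  have cP: "c = real d * P" by (simp add: c_def P_def)
  have Np: "0 < real N" using N by simp
  define W where "W = (\<Sum>j\<in>S. (f j)\<^sup>2)"
  define L where "L = (\<Sum>j\<in>S. LambdaR a V \<epsilon> R (pt \<epsilon> j) * (f j)\<^sup>2)"
  have "nC * L - K * c * W \<le> nC * Q \<phi>"
    using D LB err unfolding L_def W_def by linarith
  then have "real N * P * (L - real d * K / real N * W) \<le> real N * P * Q \<phi>"
    using Np by (simp add: nCP cP algebra_simps)
  then have "L - real d * K / real N * W \<le> Q \<phi>"
    using Np Pp by (simp add: mult_le_cancel_left_pos)
  then show ?thesis by (simp add: L_def W_def Q_def S_def f_def d_def)
qed

lemma pot_poly:
  assumes "potential_hyp \<epsilon>0 V0 V1 RV" "0 < \<epsilon>" "\<epsilon> \<le> \<epsilon>0"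
  shows "\<exists>C N. \<forall>x\<in>lattice \<epsilon>. \<bar>V0 x + \<epsilon> * V1 x + RV x \<epsilon>\<bar> \<le> C * (1 + norm x) ^ N"
proof -
  have "\<forall>\<epsilon>. 0 < \<epsilon> \<and> \<epsilon> \<le> \<epsilon>0 \<longrightarrow> (\<exists>C N. \<forall>x\<in>lattice \<epsilon>.
        \<bar>V0 x + \<epsilon> * V1 x + RV x \<epsilon>\<bar> \<le> C * (1 + norm x) ^ N)"
    using assms(1) unfolding potential_hyp_def by (elim conjE) assumption
  then show ?thesis using assms(2,3) by blast
qed

theorem lemmaB2:
  fixes a :: "int^'n \<Rightarrow> real^'n \<Rightarrow> real \<Rightarrow> real"
    and a0 a1 :: "int^'n \<Rightarrow> real^'n \<Rightarrow> real"
    and R2 :: "int^'n \<Rightarrow> real^'n \<Rightarrow> real \<Rightarrow> real"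
    and V0 V1 :: "real^'n \<Rightarrow> real"
    and RV :: "real^'n \<Rightarrow> real \<Rightarrow> real"
    and \<epsilon> \<epsilon>0 \<delta> :: real
  assumes "kinetic_hyp a a0 a1 R2"
    and "potential_hyp \<epsilon>0 V0 V1 RV"
    and "symbol_hyp a0 V0"
    and "0 < \<epsilon>" "\<epsilon> \<le> 1" "\<epsilon> \<le> \<epsilon>0"
    and "0 < \<delta>"
  shows "\<exists>R\<delta>>0. \<forall>R>R\<delta>. \<forall>\<phi>\<in>c0 \<epsilon> UNIV.
    lat_inner \<epsilon> (Hop a (\<lambda>x. V0 x + \<epsilon> * V1 x + RV x \<epsilon>) \<epsilon> \<phi>) \<phi>
    \<ge> (\<Sum>\<^sub>\<infinity>x\<in>lattice \<epsilon>.
          (LambdaR a (\<lambda>x. V0 x + \<epsilon> * V1 x + RV x \<epsilon>) \<epsilon> R x - \<delta>) * (\<phi> x)\<^sup>2)"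
proof -
  note kin = assms(1)
  have e: "0 < \<epsilon>" "\<epsilon> \<le> 1" using assms by auto
  have e0: "\<epsilon> \<noteq> 0" using e by simp
  define V where "V = (\<lambda>x. V0 x + \<epsilon> * V1 x + RV x \<epsilon>)"
  obtain K where K: "\<And>x F. finite F \<Longrightarrow> (\<Sum>k\<in>F. \<bar>a k x \<epsilon>\<bar> * (1 + norm (iv (k::int^'n)))) \<le> K"
    using coef_bound[OF kin e] by blast
  have K0: "0 \<le> K" using K[of "{}"] by simp
  have sym: "\<And>k x. a k x \<epsilon> = a (- k) (x + \<epsilon> *\<^sub>R iv k) \<epsilon>"
    using kin_sym[OF kin] e by blast
  obtain C Np where Vb0: "\<forall>x\<in>lattice \<epsilon>. \<bar>V0 x + \<epsilon> * V1 x + RV x \<epsilon>\<bar> \<le> C * (1 + norm x) ^ Np"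
    using pot_poly[OF assms(2) e(1) assms(6)] by blast
  have Vb: "\<And>y. y \<in> lattice \<epsilon> \<Longrightarrow> \<bar>V y\<bar> \<le> C * (1 + norm y) ^ Np"
    using Vb0 by (simp add: V_def)
  define d where "d = real CARD('n)"
  define N where "N = nat \<lceil>d * K / \<delta>\<rceil> + 1"
  have N1: "1 \<le> N" by (simp add: N_def)
  have Npos: "0 < real N" using N1 by simp
  have "d * K / \<delta> \<le> real N" unfolding N_def by linarith
  then have "d * K \<le> \<delta> * real N" using assms(7) by (simp add: divide_le_eq mult.commute)
  then have dKN: "d * K / real N \<le> \<delta>" using Npos by (simp add: divide_le_eq mult.commute)
  define R\<delta> where "R\<delta> = \<epsilon> * (d * real N)"
  have R\<delta>p: "0 < R\<delta>" using e Npos by (simp add: R\<delta>_def d_def)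
  have main: "(\<Sum>\<^sub>\<infinity>x\<in>lattice \<epsilon>. (LambdaR a V \<epsilon> R x - \<delta>) * (\<phi> x)\<^sup>2) \<le> lat_inner \<epsilon> (Hop a V \<epsilon> \<phi>) \<phi>"
    if R: "R > R\<delta>" and \<phi>: "\<phi> \<in> c0 \<epsilon> UNIV" for R \<phi>
  proof -
    define S where "S = {j. \<phi> (pt \<epsilon> j) \<noteq> 0}"
    note cs = c0_supp[OF e0 \<phi>]
    have fS: "finite S" and suppS: "\<And>y. \<phi> y \<noteq> 0 \<Longrightarrow> y \<in> pt \<epsilon> ` S"
      using cs(1,2) by (auto simp: S_def)
    have Rb: "\<epsilon> * (real CARD('n) * real N) < R" using R by (simp add: R\<delta>_def d_def)
    note ims = IMS[where a=a and V=V and K=K and C=C and Np=Np, OF e(1) K sym Vb N1 Rb \<phi>]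
    have inf: "(\<Sum>\<^sub>\<infinity>x\<in>lattice \<epsilon>. (LambdaR a V \<epsilon> R x - \<delta>) * (\<phi> x)\<^sup>2)
        = (\<Sum>j\<in>S. (LambdaR a V \<epsilon> R (pt \<epsilon> j) - \<delta>) * (\<phi> (pt \<epsilon> j))\<^sup>2)"
    proof -
      have "(\<Sum>\<^sub>\<infinity>x\<in>lattice \<epsilon>. (LambdaR a V \<epsilon> R x - \<delta>) * (\<phi> x)\<^sup>2)
          = sum (\<lambda>x. (LambdaR a V \<epsilon> R x - \<delta>) * (\<phi> x)\<^sup>2) (pt \<epsilon> ` S)"
        by (rule infsum_fin_supp) (use fS suppS in \<open>auto simp: lattice_pt\<close>)
      also have "\<dots> = (\<Sum>j\<in>S. (LambdaR a V \<epsilon> R (pt \<epsilon> j) - \<delta>) * (\<phi> (pt \<epsilon> j))\<^sup>2)"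
        by (subst sum.reindex) (use inj_pt[OF e0] in \<open>auto simp: inj_on_def\<close>)
      finally show ?thesis .
    qed
    define W where "W = (\<Sum>j\<in>S. (\<phi> (pt \<epsilon> j))\<^sup>2)"
    have W0: "0 \<le> W" unfolding W_def by (rule sum_nonneg) simp
    have "(\<Sum>j\<in>S. (LambdaR a V \<epsilon> R (pt \<epsilon> j) - \<delta>) * (\<phi> (pt \<epsilon> j))\<^sup>2)
        = (\<Sum>j\<in>S. LambdaR a V \<epsilon> R (pt \<epsilon> j) * (\<phi> (pt \<epsilon> j))\<^sup>2) - \<delta> * W"
      by (simp add: W_def left_diff_distrib sum_subtractf sum_distrib_left)
    also have "\<dots> \<le> (\<Sum>j\<in>S. LambdaR a V \<epsilon> R (pt \<epsilon> j) * (\<phi> (pt \<epsilon> j))\<^sup>2) - d * K / real N * W"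
      using mult_right_mono[OF dKN W0] by linarith
    also have "\<dots> \<le> lat_inner \<epsilon> (Hop a V \<epsilon> \<phi>) \<phi>"
      using ims by (simp add: S_def W_def d_def)
    finally show ?thesis using inf by simp
  qed
  show ?thesis
    using R\<delta>p main unfolding V_def by blast
qed

end
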